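(* Let $X$ be a convex subset of $\mathbb{R}^n$, $f=(f_1,\ldots,f_m):X\to\mathbb{R}^m$ a convex mapping, and $g_1,\ldots,g_\ell:X\to\mathbb{R}$ convex functions ($\ell\ge1$). Let $\Omega=\{x\in X: g_1(x)\le0,\ldots,g_\ell(x)\le0\}$. Then the following are equivalent: $(\alpha)$ $\mathrm{WE}(f|_\Omega,\Omega)=\mathrm{E}(f|_\Omega,\Omega)$; $(\beta)$ $\displaystyle\bigcup_{\emptyset\neq I\subseteq M}\mathrm{E}((f|_\Omega)_I,\Omega)\subseteq\mathrm{E}(f|_\Omega,\Omega)$, where $M=\{1,\ldots,m\}$.
   Context: A mapping $f=(f_1,\ldots,f_m)$ on a convex set is convex if each $f_i$ is a convex function. Let $M=\{1,\ldots,m\}$. For a nonempty $I\subseteq M$ and $y,y'\in\mathbb{R}^m$: $y\lneq_I y'$ means $y_i\leq y'_i$ for all $i\in I$ and $y_j<y'_j$ for some $j\in I$; $y<_I y'$ means $y_i<y'_i$ for all $i\in I$. For $Y\subseteq\mathbb{R}^m$, $\mathrm{M}_I Y$ (resp. $\mathrm{WM}_I Y$) is the set of all $y'\in Y$ for which there is no $y\in Y$ with $y\lneq_I y'$ (resp. $y<_I y'$). For a mapping $h=(h_1,\ldots,h_m):Z\to\mathbb{R}^m$ and $I=\{i_1<\cdots<i_k\}$, $h_I=(h_{i_1},\ldots,h_{i_k})$, $\mathrm{E}(h_I,Z)=h^{-1}(\mathrm{M}_I h(Z))$, $\mathrm{WE}(h_I,Z)=h^{-1}(\mathrm{WM}_I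 h(Z))$; $\mathrm{E}(h,Z)=\mathrm{E}(h_M,Z)$, $\mathrm{WE}(h,Z)=\mathrm{WE}(h_M,Z)$. $f|_\Omega$ denotes the restriction of $f$ to $\Omega$. *)

theory Defs
  imports "HOL-Analysis.Analysis"
begin

text \<open>Points of R^m are represented as functions nat => real; only the
  coordinates in the index set I matter for the orders below.\<close>

definition le_neq_on :: "nat set \<Rightarrow> (nat \<Rightarrow> real) \<Rightarrow> (nat \<Rightarrow> real) \<Rightarrow> bool" where
  "le_neq_on I y y' \<longleftrightarrow> (\<forall>i\<in>I. y i \<le> y' i) \<and> (\<exists>j\<in>I. y j < y' j)"

definition less_on :: "nat set \<Rightarrow> (nat \<Rightarrow> real) \<Rightarrow> (nat \<Rightarrow> real) \<Rightarrow> bool" where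
  "less_on I y y' \<longleftrightarrow> (\<forall>i\<in>I. y i < y' i)"

definition minimal_on :: "nat set \<Rightarrow> (nat \<Rightarrow> real) set \<Rightarrow> (nat \<Rightarrow> real) set" where
  "minimal_on I Y = {y'\<in>Y. \<not> (\<exists>y\<in>Y. le_neq_on I y y')}"

definition weak_minimal_on :: "nat set \<Rightarrow> (nat \<Rightarrow> real) set \<Rightarrow> (nat \<Rightarrow> real) set" where
  "weak_minimal_on I Y = {y'\<in>Y. \<not> (\<exists>y\<in>Y. less_on I y y')}"

definition efficient :: "nat set \<Rightarrow> ('a \<Rightarrow> nat \<Rightarrow> real) \<Rightarrow> 'a set \<Rightarrow> 'a set" where
  "efficient I h Z = {z\<in>Z. h z \<in> minimal_on I (h ` Z)}"

definition weakly_efficient :: "nat set \<Rightarrow> ('a \<Rightarrow> nat \<Rightarrow> real) \<Rightarrow> 'a set \<Rightarrow> 'a set" where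
  "weakly_efficient I h Z = {z\<in>Z. h z \<in> weak_minimal_on I (h ` Z)}"

end

theory Submission
  imports Defs
begin

lemma eff_iff: "x \<in> efficient I h Z \<longleftrightarrow> x \<in> Z \<and> \<not> (\<exists>y\<in>Z. (\<forall>i\<in>I. h y i \<le> h x i) \<and> (\<exists>j\<in>I. h y j < h x j))"
  unfolding efficient_def minimal_on_def le_neq_on_def by auto

lemma weff_iff: "x \<in> weakly_efficient I h Z \<longleftrightarrow> x \<in> Z \<and> \<not> (\<exists>y\<in>Z. \<forall>i\<in>I. h y i < h x i)"
  unfolding weakly_efficient_def weak_minimal_on_def less_on_def by auto

lemma small_t:
  fixes a d :: "nat \<Rightarrow> real"
  assumes "finite A" "\<forall>i\<in>A. d i > 0"
  shows "\<exists>t. 0 < t \<and> t < 1 \<and> (\<forall>i\<in>A. t * a i < d i)"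
proof -
  have "\<forall>i\<in>A. eventually (\<lambda>t. t * a i < d i) (at_right (0::real))"
  proof
    fix i assume i: "i \<in> A"
    have "((\<lambda>t::real. t * a i) \<longlongrightarrow> 0 * a i) (at_right 0)"
      by (intro tendsto_intros)
    then show "eventually (\<lambda>t. t * a i < d i) (at_right (0::real))"
      using i assms(2) by (auto dest: order_tendstoD(2))
  qed
  then have "eventually (\<lambda>t. \<forall>i\<in>A. t * a i < d i) (at_right (0::real))"
    using assms(1) by (rule eventually_ball_finite[rotated])
  moreover have "eventually (\<lambda>t::real. 0 < t \<and> t < 1) (at_right 0)"
    using eventually_at_right_real[of 0 1] by simp
  ultimately have "eventually (\<lambda>t::real. 0 < t \<and> t < 1 \<and> (\<forall>i\<in>A. t * a i < d i)) (at_right 0)"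
    by eventually_elim auto
  then show ?thesis
    using eventually_happens trivial_limit_at_right_real by blast
qed

lemma key:
  fixes f :: "nat \<Rightarrow> 'a::real_vector \<Rightarrow> real"
  assumes S: "convex S" and fc: "\<forall>i\<in>{1..m}. convex_on S (f i)"
    and x: "x \<in> weakly_efficient {1..m} (\<lambda>x i. f i x) S" and m: "m \<ge> 1"
  shows "\<exists>I. I \<noteq> {} \<and> I \<subseteq> {1..m} \<and> x \<in> efficient I (\<lambda>x i. f i x) S"
proof -
  define P where "P I \<longleftrightarrow> I \<noteq> {} \<and> I \<subseteq> {1..m} \<and> x \<in> weakly_efficient I (\<lambda>x i. f i x) S" for I
  have "P {1..m}" using x m by (auto simp: P_def)
  then obtain I where PI: "P I" and minI: "\<forall>K. P K \<longrightarrow> card I \<le> card K"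
    using ex_has_least_nat[of P "{1..m}" card] by blast
  have fin: "finite I" using PI finite_subset[of I "{1..m}"] by (auto simp: P_def)
  have xS: "x \<in> S" using x by (simp add: weff_iff)
  have wI: "\<not> (\<exists>y\<in>S. \<forall>i\<in>I. f i y < f i x)" using PI by (simp add: P_def weff_iff)
  have "x \<in> efficient I (\<lambda>x i. f i x) S"
  proof (rule ccontr)
    assume "x \<notin> efficient I (\<lambda>x i. f i x) S"
    then obtain y j where yS: "y \<in> S" and yle: "\<forall>i\<in>I. f i y \<le> f i x" and jI: "j \<in> I"
      and jlt: "f j y < f j x"
      using xS by (auto simp: eff_iff)
    define J where "J = {i\<in>I. f i y = f i x}"
    have Jne: "J \<noteq> {}"
    proof
      assume "J = {}"
      then have "\<forall>i\<in>I. f i y < f i x" using yle by (force simp: J_def)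
      then show False using wI yS by blast
    qed
    have "j \<notin> J" using jlt by (auto simp: J_def)
    then have "J \<subset> I" using jI by (auto simp: J_def)
    then have "card J < card I" using fin by (simp add: psubset_card_mono)
    then have "\<not> P J" using minI by force
    moreover have "J \<subseteq> {1..m}" using PI by (auto simp: P_def J_def)
    ultimately have "x \<notin> weakly_efficient J (\<lambda>x i. f i x) S" using Jne by (simp add: P_def)
    then obtain z where zS: "z \<in> S" and zlt: "\<forall>i\<in>J. f i z < f i x"
      using xS by (auto simp: weff_iff)
    obtain t where t0: "0 < t" and t1: "t < 1"
      and tA: "\<forall>i\<in>I - J. t * (f i z - f i y) < f i x - f i y"
      using small_t[of "I - J" "\<lambda>i. f i x - f i y" "\<lambda>i. f i z - f i y"] fin yle
      by (force simp: J_def)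
    define w where "w = (1 - t) *\<^sub>R y + t *\<^sub>R z"
    have wS: "w \<in> S" unfolding w_def using S yS zS t0 t1 by (intro convexD_alt) auto
    have "\<forall>i\<in>I. f i w < f i x"
    proof
      fix i assume iI: "i \<in> I"
      have "i \<in> {1..m}" using PI iI by (auto simp: P_def)
      then have cv: "f i w \<le> (1 - t) * f i y + t * f i z"
        unfolding w_def using fc yS zS t0 t1 by (intro convex_onD) auto
      show "f i w < f i x"
      proof (cases "i \<in> J")
        case True
        then have "f i y = f i x" "f i z < f i x" using zlt by (auto simp: J_def)
        moreover have "t * f i z < t * f i x" using t0 calculation(2) by simp
        ultimately show ?thesis using cv by (simp add: algebra_simps)
      next
        case False
        then have "t * (f i z - f i y) < f i x - f i y" using tA iI by auto
        then show ?thesis using cv by (simp add: algebra_simps)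
      qed
    qed
    then show False using wI wS by blast
  qed
  then show ?thesis using PI by (auto simp: P_def)
qed

theorem corollary6p3:
  fixes X :: "(real ^ 'n) set"
    and m l :: nat
    and f :: "nat \<Rightarrow> real ^ 'n \<Rightarrow> real"
    and g :: "nat \<Rightarrow> real ^ 'n \<Rightarrow> real"
    and \<Omega> :: "(real ^ 'n) set"
  assumes "convex X"
    and "m \<ge> 1"
    and "\<forall>i\<in>{1..m}. convex_on X (f i)"
    and "l \<ge> 1"
    and "\<forall>j\<in>{1..l}. convex_on X (g j)"
    and "\<Omega> = {x\<in>X. \<forall>j\<in>{1..l}. g j x \<le> 0}"
  shows "weakly_efficient {1..m} (\<lambda>x i. f i x) \<Omega> = efficient {1..m} (\<lambda>x i. f i x) \<Omega>
     \<longleftrightarrow> (\<Union>I\<in>{I. I \<noteq> {} \<and> I \<subseteq> {1..m}}. efficient I (\<lambda>x i. f i x) \<Omega>)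
           \<subseteq> efficient {1..m} (\<lambda>x i. f i x) \<Omega>"
proof -
  let ?h = "\<lambda>x i. f i x"
  have sub: "efficient I ?h \<Omega> \<subseteq> weakly_efficient {1..m} ?h \<Omega>"
    if "I \<noteq> {}" "I \<subseteq> {1..m}" for I
  proof
    fix x assume "x \<in> efficient I ?h \<Omega>"
    then show "x \<in> weakly_efficient {1..m} ?h \<Omega>"
      using that unfolding eff_iff weff_iff by (meson less_imp_le subsetD ex_in_conv)
  qed
  have EW: "efficient {1..m} ?h \<Omega> \<subseteq> weakly_efficient {1..m} ?h \<Omega>"
    using sub[of "{1..m}"] assms(2) by auto
  have OX: "\<Omega> \<subseteq> X" using assms(6) by auto
  have cO: "convex \<Omega>"
    unfolding convex_alt
  proof (intro ballI allI impI)
    fix a b and u :: real assume a: "a \<in> \<Omega>" and b: "b \<in> \<Omega>" and u: "0 \<le> u \<and> u \<le> 1"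
    have "(1 - u) *\<^sub>R a + u *\<^sub>R b \<in> X" using assms(1) a b u OX by (intro convexD_alt) auto
    moreover have "g j ((1 - u) *\<^sub>R a + u *\<^sub>R b) \<le> 0" if j: "j \<in> {1..l}" for j
    proof -
      have "g j ((1 - u) *\<^sub>R a + u *\<^sub>R b) \<le> (1 - u) * g j a + u * g j b"
        using convex_onD[of X "g j" u a b] assms(5) j a b u OX by auto
      moreover have "g j a \<le> 0" "g j b \<le> 0" using a b j assms(6) by auto
      moreover have "(1 - u) * g j a \<le> 0" "u * g j b \<le> 0"
        using u calculation(2,3) by (auto simp: mult_nonneg_nonpos)
      ultimately show ?thesis by linarith
    qed
    ultimately show "(1 - u) *\<^sub>R a + u *\<^sub>R b \<in> \<Omega>" using assms(6) by auto
  qed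
  have fc: "\<forall>i\<in>{1..m}. convex_on \<Omega> (f i)"
    using assms(3) OX cO convex_on_subset by blast
  show ?thesis
  proof
    assume "weakly_efficient {1..m} ?h \<Omega> = efficient {1..m} ?h \<Omega>"
    then show "(\<Union>I\<in>{I. I \<noteq> {} \<and> I \<subseteq> {1..m}}. efficient I ?h \<Omega>) \<subseteq> efficient {1..m} ?h \<Omega>"
      using sub by auto
  next
    assume H: "(\<Union>I\<in>{I. I \<noteq> {} \<and> I \<subseteq> {1..m}}. efficient I ?h \<Omega>) \<subseteq> efficient {1..m} ?h \<Omega>"
    have "weakly_efficient {1..m} ?h \<Omega> \<subseteq> efficient {1..m} ?h \<Omega>"
    proof
      fix x assume "x \<in> weakly_efficient {1..m} ?h \<Omega>"
      then obtain I where "I \<noteq> {}" "I \<subseteq> {1..m}" "x \<in> efficient I ?h \<Omega>"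
        using key[OF cO fc _ assms(2)] by blast
      then show "x \<in> efficient {1..m} ?h \<Omega>" using H by blast
    qed
    then show "weakly_efficient {1..m} ?h \<Omega> = efficient {1..m} ?h \<Omega>" using EW by blast
  qed
qed

end
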